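(* Let $p$ be an odd prime of the form $p = q^2 + 1$ for some integer $q$. Then the sequence $\left(\left\lfloor n^{(p-1)/2}/p \right\rfloor\right)_{n \ge 1}$ is eventually prime-free. In particular, each of the sequences $\left\lfloor n^2/5 \right\rfloor$, $\left\lfloor n^8/17 \right\rfloor$, $\left\lfloor n^{18}/37 \right\rfloor$, $\left\lfloor n^{50}/101 \right\rfloor$, $\left\lfloor n^{98}/197 \right\rfloor$, $\left\lfloor n^{128}/257 \right\rfloor$ ($n \ge 1$) is eventually prime-free.
   Context: A sequence $(a_n)_{n\ge 1}$ of positive integers is called eventually prime-free if there exists an index $n_0$ such that $a_n$ is composite for all $n \ge n_0$. (Here, as in the paper, this is understood as: only finitely many terms $a_n$ are prime.) *)

theory Defs
  imports "HOL-Computational_Algebra.Primes"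
begin

definition eventually_prime_free :: "(nat \<Rightarrow> nat) \<Rightarrow> bool" where
  "eventually_prime_free a \<longleftrightarrow> finite {n. n \<ge> 1 \<and> prime (a n)}"

end

theory Submission
  imports Defs "HOL-Number_Theory.Number_Theory"
begin

lemma not_prime_prod:
  fixes p N A B :: nat
  assumes "prime p" "p * N = A * B" "A > p" "B > p"
  shows "\<not> prime N"
proof
  assume pN: "prime N"
  have p0: "p > 0" using assms(1) prime_gt_0_nat by blast
  have "p dvd A * B" unfolding assms(2)[symmetric] by (rule dvd_triv_left)
  then have "p dvd A \<or> p dvd B" using assms(1) prime_dvd_mult_iff by blast
  then show False
  proof
    assume "p dvd A"
    then obtain a where a: "A = p * a" by blast
    have "p * N = p * (a * B)" using assms(2) a by (simp only: mult.assoc)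
    then have "N = a * B" using p0 by simp
    then have "prime (a * B)" using pN by simp
    then have "a = 1 \<or> B = 1" by (rule prime_product)
    moreover have "a \<noteq> 1" using a assms(3) by auto
    ultimately show False using assms(4) p0 by linarith
  next
    assume "p dvd B"
    then obtain b where b: "B = p * b" by blast
    have "p * N = p * (A * b)" using assms(2) b by (simp only: mult.left_commute)
    then have "N = A * b" using p0 by simp
    then have "prime (A * b)" using pN by simp
    then have "A = 1 \<or> b = 1" by (rule prime_product)
    moreover have "b \<noteq> 1" using b assms(4) by auto
    ultimately show False using assms(3) p0 by linarith
  qed
qed

lemma key:
  fixes p m n :: nat
  assumes pr: "prime p" and pm: "p = 4 * m^2 + 1" and m1: "m \<ge> 1" and n: "n > 2 * p"
  shows "\<not> prime (n ^ (2 * m^2) div p)"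
proof -
  define x where "x = n ^ (m^2)"
  define y where "y = n ^ (2 * m^2)"
  define N where "N = y div p"
  have p1: "p > 1" using pr prime_gt_1_nat by blast
  have yx: "y = x * x" unfolding x_def y_def mult_2 power_add by (rule refl)
  have "m^2 \<ge> 1" using m1 by simp
  then have xn: "x \<ge> n" unfolding x_def using n power_increasing[of 1 "m^2" n] by simp
  have ydiv: "y = p * N + y mod p" unfolding N_def by (rule div_mult_mod_eq[symmetric, of y p, unfolded mult.commute[of "y div p" p]])
  have "\<not> prime N"
  proof (cases "p dvd n")
    case True
    have "n dvd x" unfolding x_def using m1 by (intro dvd_power disjI1) simp
    then have "p dvd x" using True dvd_trans by blast
    then have "p dvd y" using yx by simp
    then have "y mod p = 0" by simp
    then have e: "p * N = x * x" using ydiv yx by linarith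
    have "x > p" using xn n by linarith
    then show ?thesis using not_prime_prod[OF pr e] by blast
  next
    case False
    have "[n ^ (p - 1) = 1] (mod p)" using fermat_theorem[OF pr False] .
    moreover have "n ^ (p - 1) = y * y"
    proof -
      have "p - 1 = 2 * m^2 + 2 * m^2" using pm by simp
      then show ?thesis unfolding y_def by (simp only: power_add)
    qed
    ultimately have "[y * y = 1] (mod p)" by simp
    have y1: "y \<ge> 1" using n unfolding y_def by simp
    have "p dvd (y * y - 1)" using \<open>[y * y = 1] (mod p)\<close> by (rule cong_to_1_nat)
    moreover have "y * y - 1 = (y - 1) * (y + 1)"
    proof -
      have "(y - 1) * (y + 1) + 1 = y * y" using y1 by (cases y) auto
      then show ?thesis by linarith
    qed
    ultimately have "p dvd (y - 1) * (y + 1)" by simp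
    then have "p dvd (y - 1) \<or> p dvd (y + 1)" using pr prime_dvd_mult_iff by blast
    then show ?thesis
    proof
      assume "p dvd (y - 1)"
      then obtain c where c: "y - 1 = p * c" by blast
      then have yc: "y = p * c + 1" using y1 by linarith
      have "y mod p = 1 mod p" unfolding yc by (rule mod_mult_self4)
      then have "y mod p = 1" using p1 by simp
      then have "p * N = y - 1" using ydiv by linarith
      also have "\<dots> = (x - 1) * (x + 1)"
      proof -
        have "x \<ge> 1" using xn n by linarith
        then have "(x - 1) * (x + 1) + 1 = x * x" by (cases x) auto
        then show ?thesis using yx by linarith
      qed
      finally have e: "p * N = (x - 1) * (x + 1)" .
      have "x - 1 > p" using xn n p1 by linarith
      moreover have "x + 1 > p" using xn n by linarith
      ultimately
      show ?thesis using not_prime_prod[OF pr e] by blast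
    next
      assume d: "p dvd (y + 1)"
      obtain c where c: "y + 1 = p * c" using d by blast
      have "c \<noteq> 0"
      proof
        assume "c = 0"
        then show False using c by simp
      qed
      then obtain d where "c = Suc d" using not0_implies_Suc by blast
      then have "y + 1 = p * d + p" using c by simp
      then have yd: "y = p * d + (p - 1)" using p1 by linarith
      have "y mod p = (p - 1) mod p" unfolding yd by (rule mod_mult_self4)
      then have "y mod p = p - 1" using p1 by simp
      have "m \<le> m^2" by (simp add: power2_eq_square)
      then have "2 * m < p" using pm by linarith
      have "p * N = y - (p - 1)" using ydiv \<open>y mod p = p - 1\<close> by linarith
      also have "\<dots> = x * x - 4 * m^2" using pm yx by simp
      also have "\<dots> = (x - 2 * m) * (x + 2 * m)"
      proof -
        have "2 * m \<le> x" using \<open>2 * m < p\<close> xn n by linarith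
        then obtain a where a: "x = a + 2 * m" using le_Suc_ex[of "2*m" x] by (auto simp: add.commute)
        have "x * x = (x - 2 * m) * (x + 2 * m) + 4 * m^2"
          unfolding a by (simp add: algebra_simps power2_eq_square)
        then show ?thesis by linarith
      qed
      finally have e: "p * N = (x - 2 * m) * (x + 2 * m)" .
      have "x - 2 * m > p" using xn n \<open>2 * m < p\<close> by linarith
      moreover have "x + 2 * m > p" using xn n by linarith
      ultimately show ?thesis using not_prime_prod[OF pr e] by blast
    qed
  qed
  then show ?thesis unfolding N_def y_def .
qed

lemma general:
  fixes p :: nat and q :: int
  assumes "prime p" "odd p" "int p = q^2 + 1"
  shows "eventually_prime_free (\<lambda>n. n ^ ((p - 1) div 2) div p)"
proof -
  have "odd (int p)" using assms(2) by simp
  then have "even (q^2)" using assms(3) by simp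
  then have "even q" by simp
  then obtain r where r: "q = 2 * r" by blast
  define m where "m = nat \<bar>r\<bar>"
  have "int p = 4 * (int m)^2 + 1" using assms(3) r unfolding m_def by (simp add: power2_eq_square)
  also have "\<dots> = int (4 * m^2 + 1)" by simp
  finally have pm: "p = 4 * m^2 + 1" by (simp only: of_nat_eq_iff)
  have "m \<noteq> 0"
  proof
    assume "m = 0"
    then have "p = 1" using pm by simp
    then show False using assms(1) by simp
  qed
  then have m1: "m \<ge> 1" by simp
  have k: "(p - 1) div 2 = 2 * m^2" using pm by simp
  have "{n. n \<ge> 1 \<and> prime (n ^ ((p - 1) div 2) div p)} \<subseteq> {..2*p}"
  proof
    fix n assume "n \<in> {n. n \<ge> 1 \<and> prime (n ^ ((p - 1) div 2) div p)}"
    then have "prime (n ^ (2 * m^2) div p)" unfolding k by simp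
    then have "\<not> n > 2 * p" using key[OF assms(1) pm m1] by blast
    then show "n \<in> {..2*p}" by simp
  qed
  then show ?thesis unfolding eventually_prime_free_def using finite_subset by blast
qed

lemma p5: "prime (5::nat)" unfolding prime_nat_iff' set_upt[symmetric] by code_simp
lemma p17: "prime (17::nat)" unfolding prime_nat_iff' set_upt[symmetric] by code_simp
lemma p37: "prime (37::nat)" unfolding prime_nat_iff' set_upt[symmetric] by code_simp
lemma p101: "prime (101::nat)" unfolding prime_nat_iff' set_upt[symmetric] by code_simp
lemma p197: "prime (197::nat)" unfolding prime_nat_iff' set_upt[symmetric] by code_simp
lemma p257: "prime (257::nat)" unfolding prime_nat_iff' set_upt[symmetric] by code_simp

theorem theorem10:
  shows "(\<forall>p::nat. \<forall>q::int. prime p \<and> odd p \<and> int p = q^2 + 1 \<longrightarrow>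
            eventually_prime_free (\<lambda>n. n ^ ((p - 1) div 2) div p))
       \<and> eventually_prime_free (\<lambda>n. n ^ 2 div 5)
       \<and> eventually_prime_free (\<lambda>n. n ^ 8 div 17)
       \<and> eventually_prime_free (\<lambda>n. n ^ 18 div 37)
       \<and> eventually_prime_free (\<lambda>n. n ^ 50 div 101)
       \<and> eventually_prime_free (\<lambda>n. n ^ 98 div 197)
       \<and> eventually_prime_free (\<lambda>n. n ^ 128 div 257)"
proof (intro conjI allI impI)
  fix p :: nat and q :: int
  assume "prime p \<and> odd p \<and> int p = q^2 + 1"
  then show "eventually_prime_free (\<lambda>n. n ^ ((p - 1) div 2) div p)" using general by blast
next
  show "eventually_prime_free (\<lambda>n. n ^ 2 div 5)" using general[OF p5, of 2] by simp
next
  show "eventually_prime_free (\<lambda>n. n ^ 8 div 17)" using general[OF p17, of 4] by simp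
next
  show "eventually_prime_free (\<lambda>n. n ^ 18 div 37)" using general[OF p37, of 6] by simp
next
  show "eventually_prime_free (\<lambda>n. n ^ 50 div 101)" using general[OF p101, of 10] by simp
next
  show "eventually_prime_free (\<lambda>n. n ^ 98 div 197)" using general[OF p197, of 14] by simp
next
  show "eventually_prime_free (\<lambda>n. n ^ 128 div 257)" using general[OF p257, of 16] by simp
qed

end
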